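(* Let $k\geq 0$ and let $i,j$ be integers with $k+2\leq i,j\leq 2k+2$. Then $R_k^{\mathcal{CO}}(i,j)=i+j-k-2$, where $\mathcal{CO}$ is the class of cographs.
   Context: All graphs are finite and simple. For a graph $G$ and a nonnegative integer $k$, a $k$-sparse $j$-set is a set of $j$ vertices of $G$ inducing a subgraph of maximum degree at most $k$; a $k$-dense $i$-set is a set of $i$ vertices of $G$ that is $k$-sparse in the complement of $G$. For a graph class $\mathcal{G}$, $R_k^{\mathcal{G}}(i,j)$ is the smallest natural number $n$ such that every graph on $n$ vertices in $\mathcal{G}$ has either a $k$-dense $i$-set or a $k$-sparse $j$-set. A cograph is a graph containing no induced path on four vertices. *)

theory Defs
  imports Main
begin

definition simple_graph :: "nat \<Rightarrow> (nat \<Rightarrow> nat \<Rightarrow> bool) \<Rightarrow> bool" where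
  "simple_graph n E \<longleftrightarrow>
     (\<forall>u\<in>{..<n}. \<forall>v\<in>{..<n}. E u v \<longleftrightarrow> E v u) \<and> (\<forall>v\<in>{..<n}. \<not> E v v)"

definition cograph :: "nat \<Rightarrow> (nat \<Rightarrow> nat \<Rightarrow> bool) \<Rightarrow> bool" where
  "cograph n E \<longleftrightarrow> \<not> (\<exists>a\<in>{..<n}. \<exists>b\<in>{..<n}. \<exists>c\<in>{..<n}. \<exists>d\<in>{..<n}.
      distinct [a, b, c, d] \<and> E a b \<and> E b c \<and> E c d \<and>
      \<not> E a c \<and> \<not> E b d \<and> \<not> E a d)"

definition compl_graph :: "(nat \<Rightarrow> nat \<Rightarrow> bool) \<Rightarrow> nat \<Rightarrow> nat \<Rightarrow> bool" where
  "compl_graph E u v \<longleftrightarrow> u \<noteq> v \<and> \<not> E u v"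

definition sparse_set :: "nat \<Rightarrow> (nat \<Rightarrow> nat \<Rightarrow> bool) \<Rightarrow> nat \<Rightarrow> nat \<Rightarrow> nat set \<Rightarrow> bool" where
  "sparse_set n E k j S \<longleftrightarrow> S \<subseteq> {..<n} \<and> card S = j \<and>
     (\<forall>v\<in>S. card {u\<in>S. E v u} \<le> k)"

definition dense_set :: "nat \<Rightarrow> (nat \<Rightarrow> nat \<Rightarrow> bool) \<Rightarrow> nat \<Rightarrow> nat \<Rightarrow> nat set \<Rightarrow> bool" where
  "dense_set n E k i S \<longleftrightarrow> sparse_set n (compl_graph E) k i S"

definition R_cograph :: "nat \<Rightarrow> nat \<Rightarrow> nat \<Rightarrow> nat" where
  "R_cograph k i j = (LEAST n. \<forall>E. simple_graph n E \<and> cograph n E \<longrightarrow>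
      (\<exists>S. dense_set n E k i S) \<or> (\<exists>S. sparse_set n E k j S))"

end

theory Submission
  imports Defs
begin

definition p4free :: "nat set \<Rightarrow> (nat \<Rightarrow> nat \<Rightarrow> bool) \<Rightarrow> bool" where
  "p4free V E \<longleftrightarrow> \<not> (\<exists>a\<in>V. \<exists>b\<in>V. \<exists>c\<in>V. \<exists>d\<in>V.
      distinct [a, b, c, d] \<and> E a b \<and> E b c \<and> E c d \<and>
      \<not> E a c \<and> \<not> E b d \<and> \<not> E a d)"

definition good :: "nat set \<Rightarrow> (nat \<Rightarrow> nat \<Rightarrow> bool) \<Rightarrow> (nat \<Rightarrow> nat \<Rightarrow> bool) \<Rightarrow> bool" where
  "good V E F \<longleftrightarrow> finite V \<and> (\<forall>u\<in>V. \<forall>v\<in>V. E u v = E v u) \<and> (\<forall>v\<in>V. \<not> E v v) \<and>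
     (\<forall>u\<in>V. \<forall>v\<in>V. F u v = (u \<noteq> v \<and> \<not> E u v)) \<and> p4free V E \<and> p4free V F"

definition splits :: "nat set \<Rightarrow> (nat \<Rightarrow> nat \<Rightarrow> bool) \<Rightarrow> bool" where
  "splits V E \<longleftrightarrow> (\<exists>A B. A \<union> B = V \<and> A \<inter> B = {} \<and> A \<noteq> {} \<and> B \<noteq> {} \<and>
     (\<forall>x\<in>A. \<forall>y\<in>B. \<not> E x y))"

definition concl :: "nat \<Rightarrow> nat set \<Rightarrow> (nat \<Rightarrow> nat \<Rightarrow> bool) \<Rightarrow> (nat \<Rightarrow> nat \<Rightarrow> bool) \<Rightarrow> nat \<Rightarrow> nat \<Rightarrow> bool" where
  "concl k V E F a b \<longleftrightarrow>
     (\<exists>S\<subseteq>V. card S = k + 1 + a \<and> (\<forall>v\<in>S. card {u\<in>S. F v u} \<le> k)) \<or>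
     (\<exists>S\<subseteq>V. card S = k + 1 + b \<and> (\<forall>v\<in>S. card {u\<in>S. E v u} \<le> k))"

lemma concl_swap: "concl k V F E b a = concl k V E F a b"
  unfolding concl_def by blast

lemma p4_compl:
  assumes F: "\<forall>u\<in>V. \<forall>v\<in>V. F u v = (u \<noteq> v \<and> \<not> E u v)" and p: "p4free V E"
    and sy: "\<forall>u\<in>V. \<forall>v\<in>V. E u v = E v u"
  shows "p4free V F"
proof -
  have False if "a\<in>V" "b\<in>V" "c\<in>V" "d\<in>V" "distinct [a, b, c, d]" "F a b" "F b c" "F c d"
      "\<not> F a c" "\<not> F b d" "\<not> F a d" for a b c d
  proof -
    have "distinct [b, d, a, c]" "E b d" "E d a" "E a c" "\<not> E b a" "\<not> E d c" "\<not> E b c"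
      using that F sy[rule_format, of a b] sy[rule_format, of d c] sy[rule_format, of a d] by auto
    then show False using p that(1-4) unfolding p4free_def by blast
  qed
  then show ?thesis unfolding p4free_def by blast
qed

lemma good_sym: "good V E F \<Longrightarrow> good V F E"
  unfolding good_def by auto

lemma good_sub: "good V E F \<Longrightarrow> W \<subseteq> V \<Longrightarrow> good W E F"
  unfolding good_def p4free_def by (auto intro: finite_subset) (meson subsetD)+

lemma p4freeD:
  "p4free V E \<Longrightarrow> a \<in> V \<Longrightarrow> b \<in> V \<Longrightarrow> c \<in> V \<Longrightarrow> d \<in> V \<Longrightarrow> distinct [a, b, c, d] \<Longrightarrow>
   E a b \<Longrightarrow> E b c \<Longrightarrow> E c d \<Longrightarrow> \<not> E a c \<Longrightarrow> \<not> E b d \<Longrightarrow> \<not> E a d \<Longrightarrow> False"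
  unfolding p4free_def by blast

lemma splitsI:
  "A \<union> B = V \<Longrightarrow> A \<inter> B = {} \<Longrightarrow> A \<noteq> {} \<Longrightarrow> B \<noteq> {} \<Longrightarrow> (\<And>x y. x \<in> A \<Longrightarrow> y \<in> B \<Longrightarrow> \<not> E x y)
   \<Longrightarrow> splits V E"
  unfolding splits_def by blast

lemma decomp_step:
  assumes g: "good V E F" and v: "v \<in> V" and AB: "A \<union> B = V - {v}" "A \<inter> B = {}"
    and cross: "\<forall>x\<in>A. \<forall>y\<in>B. \<not> E x y"
    and x: "x \<in> A" "\<not> E v x" and z: "z \<in> B" "E v z"
  shows "splits V E"
proof -
  have sym: "\<And>p q. p \<in> V \<Longrightarrow> q \<in> V \<Longrightarrow> E p q = E q p" using g unfolding good_def by blast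
  have p4: "p4free V E" using g unfolding good_def by blast
  define N where "N = {u\<in>A. E v u}"
  show ?thesis
  proof (cases "\<forall>y\<in>N. \<forall>w\<in>A - N. \<not> E y w")
    case True
    have "N \<union> B \<union> {v} \<union> (A - N) = V" using AB v N_def by auto
    moreover have "(N \<union> B \<union> {v}) \<inter> (A - N) = {}" using AB v by auto
    moreover have "\<forall>p\<in>N \<union> B \<union> {v}. \<forall>q\<in>A - N. \<not> E p q"
    proof (intro ballI)
      fix p q assume p: "p \<in> N \<union> B \<union> {v}" and q: "q \<in> A - N"
      have qV: "q \<in> V" using q AB by auto
      show "\<not> E p q"
      proof -
        { assume "p \<in> N" then have ?thesis using True q by blast }
        moreover
        { assume pB: "p \<in> B" then have "p \<in> V" using AB by auto
          then have ?thesis using sym[OF _ qV] cross q pB by blast }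
        moreover
        { assume "p = v" then have ?thesis using q N_def by auto }
        ultimately show ?thesis using p by blast
      qed
    qed
    moreover have "A - N \<noteq> {}" using x N_def by auto
    ultimately show ?thesis by (intro splitsI[of "N \<union> B \<union> {v}" "A - N"]) auto
  next
    case False
    then obtain y w where y: "y \<in> N" and w: "w \<in> A - N" and yw: "E y w" by blast
    have yA: "y \<in> A" and wA: "w \<in> A" using y w N_def by auto
    have yV: "y \<in> V" and wV: "w \<in> V" and zV: "z \<in> V" using yA wA z AB by auto
    have d: "distinct [w, y, v, z]" using y w N_def AB yA wA z by auto
    have "E w y" using yw sym[OF yV wV] by simp
    moreover have "E y v" using y N_def sym[OF yV v] by simp
    moreover have "\<not> E w v" using w N_def sym[OF wV v] by simp
    moreover have "\<not> E y z" using cross yA z by blast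
    moreover have "\<not> E w z" using cross wA z by blast
    ultimately show ?thesis using p4freeD[OF p4 wV yV v zV d] z by blast
  qed
qed

lemma decomp_step2:
  assumes g: "good V E F" and v: "v \<in> V" and AB: "A \<union> B = V - {v}" "A \<inter> B = {}"
    and ne: "A \<noteq> {}" "B \<noteq> {}"
    and cross: "\<forall>x\<in>A. \<forall>y\<in>B. \<not> E x y"
  shows "splits V E \<or> splits V F"
proof -
  have sym: "\<And>p q. p \<in> V \<Longrightarrow> q \<in> V \<Longrightarrow> E p q = E q p" using g unfolding good_def by blast
  have Fd: "\<forall>u\<in>V. \<forall>w\<in>V. F u w = (u \<noteq> w \<and> \<not> E u w)" using g unfolding good_def by blast
  have irr: "\<not> E v v" using g v unfolding good_def by blast
  have cross': "\<forall>x\<in>B. \<forall>y\<in>A. \<not> E x y" using cross sym AB by blast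
  show ?thesis
  proof (cases "\<forall>y\<in>B. \<not> E v y")
    case True
    have "(A \<union> {v}) \<union> B = V" "(A \<union> {v}) \<inter> B = {}" using AB v by auto
    moreover have "\<forall>p\<in>A \<union> {v}. \<forall>q\<in>B. \<not> E p q" using True cross by blast
    ultimately have "splits V E" using ne by (intro splitsI[of "A \<union> {v}" B]) auto
    then show ?thesis by simp
  next
    case F1: False
    then obtain z where z: "z \<in> B" "E v z" by blast
    show ?thesis
    proof (cases "\<forall>y\<in>A. \<not> E v y")
      case True
      have "(B \<union> {v}) \<union> A = V" "(B \<union> {v}) \<inter> A = {}" using AB v by auto
      moreover have "\<forall>p\<in>B \<union> {v}. \<forall>q\<in>A. \<not> E p q" using True cross' by blast
      ultimately have "splits V E" using ne by (intro splitsI[of "B \<union> {v}" A]) auto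
      then show ?thesis by simp
    next
      case F2: False
      then obtain w where w: "w \<in> A" "E v w" by blast
      show ?thesis
      proof (cases "\<forall>u\<in>V - {v}. E v u")
        case True
        have "{v} \<union> (V - {v}) = V" "{v} \<inter> (V - {v}) = {}" "V - {v} \<noteq> {}" using v AB ne by auto
        moreover have "\<forall>p\<in>{v}. \<forall>q\<in>V - {v}. \<not> F p q" using True Fd v by auto
        ultimately have "splits V F" by (intro splitsI[of "{v}" "V - {v}"]) auto
        then show ?thesis by simp
      next
        case False
        then obtain x where x: "x \<in> V - {v}" "\<not> E v x" by blast
        show ?thesis
        proof (cases "x \<in> A")
          case True
          then show ?thesis using decomp_step[OF g v AB cross True x(2) z] by blast
        next
          case False
          then have "x \<in> B" using x AB by auto
          moreover have "B \<union> A = V - {v}" "B \<inter> A = {}" using AB by auto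
          ultimately show ?thesis using decomp_step[OF g v _ _ cross' _ x(2) w] by blast
        qed
      qed
    qed
  qed
qed

lemma decomp_n:
  "card V = n \<Longrightarrow> good V E F \<Longrightarrow> 2 \<le> n \<Longrightarrow> splits V E \<or> splits V F"
proof (induction n arbitrary: V E F rule: less_induct)
  case (less n)
  have fin: "finite V" using less.prems unfolding good_def by blast
  have Fd: "\<forall>u\<in>V. \<forall>w\<in>V. F u w = (u \<noteq> w \<and> \<not> E u w)" using less.prems unfolding good_def by blast
  show ?case
  proof (cases "n = 2")
    case True
    then obtain x y where xy: "V = {x, y}" "x \<noteq> y" using less.prems card_2_iff by metis
    show ?thesis
    proof (cases "E x y")
      case True
      have "{x} \<union> {y} = V" "{x} \<inter> {y} = {}" using xy by auto
      moreover have "\<forall>p\<in>{x}. \<forall>q\<in>{y}. \<not> F p q" using True Fd xy by auto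
      ultimately have "splits V F" by (intro splitsI[of "{x}" "{y}"]) auto
      then show ?thesis by simp
    next
      case False
      have "{x} \<union> {y} = V" "{x} \<inter> {y} = {}" using xy by auto
      moreover have "\<forall>p\<in>{x}. \<forall>q\<in>{y}. \<not> E p q" using False by auto
      ultimately have "splits V E" by (intro splitsI[of "{x}" "{y}"]) auto
      then show ?thesis by simp
    qed
  next
    case False
    then have "V \<noteq> {}" using less.prems by auto
    then obtain v where v: "v \<in> V" by blast
    have cW: "card (V - {v}) = n - 1" using v fin less.prems by auto
    have gW: "good (V - {v}) E F" using good_sub[OF less.prems(2)] by blast
    have "splits (V - {v}) E \<or> splits (V - {v}) F"
      using less.IH[of "n - 1", OF _ cW gW] False less.prems(3) by auto
    then show ?thesis
    proof
      assume "splits (V - {v}) E"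
      then obtain A B where "A \<union> B = V - {v}" "A \<inter> B = {}" "A \<noteq> {}" "B \<noteq> {}"
        "\<forall>x\<in>A. \<forall>y\<in>B. \<not> E x y" unfolding splits_def by blast
      then show ?thesis using decomp_step2[OF less.prems(2) v, of A B] by blast
    next
      assume "splits (V - {v}) F"
      then obtain A B where "A \<union> B = V - {v}" "A \<inter> B = {}" "A \<noteq> {}" "B \<noteq> {}"
        "\<forall>x\<in>A. \<forall>y\<in>B. \<not> F x y" unfolding splits_def by blast
      then show ?thesis using decomp_step2[OF good_sym[OF less.prems(2)] v, of A B] by blast
    qed
  qed
qed


lemma split_big:
  assumes g: "good V E F" and AB: "A \<union> B = V" "A \<inter> B = {}"
    and cross: "\<forall>x\<in>A. \<forall>y\<in>B. \<not> E x y"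
    and ab: "1 \<le> a" "b \<le> k + 1" and cV: "card V = a + b + k"
    and cA: "b \<le> card A" and cB: "b \<le> card B"
  shows "concl k V E F a b"
proof -
  have fin: "finite V" using g unfolding good_def by blast
  have irr: "\<forall>v\<in>V. \<not> E v v" using g unfolding good_def by blast
  have fA: "finite A" and fB: "finite B" using fin AB by auto
  have cAB: "card A + card B = card V" using card_Un_disjoint[OF fA fB AB(2)] AB(1) by simp
  define x where "x = min (card A) (k + 1)"
  define y where "y = k + 1 + b - x"
  have xA: "x \<le> card A" and yB: "y \<le> card B" and xk: "x \<le> k + 1" and yk: "y \<le> k + 1"
    and xy: "x + y = k + 1 + b"
    using cA cB ab cV cAB unfolding x_def y_def by auto
  obtain A' where A': "A' \<subseteq> A" "card A' = x" "finite A'" using obtain_subset_with_card_n[OF xA] by blast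
  obtain B' where B': "B' \<subseteq> B" "card B' = y" "finite B'" using obtain_subset_with_card_n[OF yB] by blast
  have dis: "A' \<inter> B' = {}" using A' B' AB by auto
  have cS: "card (A' \<union> B') = k + 1 + b" using card_Un_disjoint[OF A'(3) B'(3) dis] A' B' xy by simp
  have "\<forall>v\<in>A' \<union> B'. card {u\<in>A' \<union> B'. E v u} \<le> k"
  proof
    fix v assume v: "v \<in> A' \<union> B'"
    then have vV: "v \<in> V" using A' B' AB by auto
    show "card {u\<in>A' \<union> B'. E v u} \<le> k"
    proof (cases "v \<in> A'")
      case True
      have "{u\<in>A' \<union> B'. E v u} \<subseteq> A' - {v}"
      proof
        fix u assume u: "u \<in> {u\<in>A' \<union> B'. E v u}"
        have "v \<in> A" using True A' by blast
        then have "u \<notin> B'" using u cross B'(1) by blast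
        moreover have "u \<noteq> v" using u irr vV by blast
        ultimately show "u \<in> A' - {v}" using u by blast
      qed
      then have "card {u\<in>A' \<union> B'. E v u} \<le> card (A' - {v})" using A'(3) by (intro card_mono) auto
      also have "\<dots> = x - 1" using True A' by simp
      finally show ?thesis using xk by simp
    next
      case False
      then have vB: "v \<in> B'" using v by auto
      have sy: "\<forall>u\<in>A'. \<not> E v u"
      proof
        fix u assume u: "u \<in> A'"
        then have uA: "u \<in> A" using A' by blast
        then have uV: "u \<in> V" using AB by blast
        have "v \<in> B" using vB B' by blast
        then have "\<not> E u v" using uA cross by blast
        then show "\<not> E v u" using g uV vV unfolding good_def by blast
      qed
      have "{u\<in>A' \<union> B'. E v u} \<subseteq> B' - {v}"
      proof
        fix u assume u: "u \<in> {u\<in>A' \<union> B'. E v u}"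
        have "u \<notin> A'" using u sy by blast
        moreover have "u \<noteq> v" using u irr vV by blast
        ultimately show "u \<in> B' - {v}" using u by blast
      qed
      then have "card {u\<in>A' \<union> B'. E v u} \<le> card (B' - {v})" using B'(3) by (intro card_mono) auto
      also have "\<dots> = y - 1" using vB B' by simp
      finally show ?thesis using yk by simp
    qed
  qed
  moreover have "A' \<union> B' \<subseteq> V" using A' B' AB by auto
  ultimately show ?thesis unfolding concl_def using cS by blast
qed

lemma split_small:
  assumes g: "good V E F" and AB: "A \<union> B = V" "A \<inter> B = {}" "B \<noteq> {}"
    and cross: "\<forall>x\<in>A. \<forall>y\<in>B. \<not> E x y"
    and ab: "1 \<le> a" "b \<le> k + 1" and cV: "card V = a + b + k"
    and cB: "card B < b"
    and IH: "\<And>W b'. W \<subseteq> V \<Longrightarrow> card W < card V \<Longrightarrow> 1 \<le> b' \<Longrightarrow> b' \<le> k + 1 \<Longrightarrow>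
       card W = a + b' + k \<Longrightarrow> concl k W E F a b'"
  shows "concl k V E F a b"
proof -
  have fin: "finite V" using g unfolding good_def by blast
  have irr: "\<forall>v\<in>V. \<not> E v v" using g unfolding good_def by blast
  have sym: "\<forall>u\<in>V. \<forall>v\<in>V. E u v = E v u" using g unfolding good_def by blast
  have fA: "finite A" and fB: "finite B" using fin AB by auto
  have cAB: "card A + card B = card V" using card_Un_disjoint[OF fA fB AB(2)] AB(1) by simp
  have cB0: "card B > 0" using AB(3) fB by auto
  define b' where "b' = b - card B"
  have cA: "card A = a + b' + k" using cAB cV cB unfolding b'_def by auto
  have b1: "1 \<le> b'" "b' \<le> k + 1" using cB ab unfolding b'_def by auto
  have "card A < card V" using cAB cB0 by linarith
  moreover have "A \<subseteq> V" using AB by blast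
  ultimately have "concl k A E F a b'"
    using IH[of A b'] b1 cA by blast
  then show ?thesis
    unfolding concl_def
  proof
    assume "\<exists>S\<subseteq>A. card S = k + 1 + a \<and> (\<forall>v\<in>S. card {u \<in> S. F v u} \<le> k)"
    then show "(\<exists>S\<subseteq>V. card S = k + 1 + a \<and> (\<forall>v\<in>S. card {u \<in> S. F v u} \<le> k)) \<or>
      (\<exists>S\<subseteq>V. card S = k + 1 + b \<and> (\<forall>v\<in>S. card {u \<in> S. E v u} \<le> k))" using AB by blast
  next
    assume "\<exists>S\<subseteq>A. card S = k + 1 + b' \<and> (\<forall>v\<in>S. card {u \<in> S. E v u} \<le> k)"
    then obtain S1 where S1: "S1 \<subseteq> A" "card S1 = k + 1 + b'" "\<forall>v\<in>S1. card {u \<in> S1. E v u} \<le> k"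
      by blast
    have fS1: "finite S1" using S1(1) fA finite_subset by blast
    have dis: "S1 \<inter> B = {}" using S1 AB by auto
    have cS: "card (S1 \<union> B) = k + 1 + b" using card_Un_disjoint[OF fS1 fB dis] S1 cB unfolding b'_def by simp
    have "\<forall>v\<in>S1 \<union> B. card {u\<in>S1 \<union> B. E v u} \<le> k"
    proof
      fix v assume v: "v \<in> S1 \<union> B"
      show "card {u\<in>S1 \<union> B. E v u} \<le> k"
      proof (cases "v \<in> S1")
        case True
        have vA: "v \<in> A" using True S1(1) by blast
        have "{u\<in>S1 \<union> B. E v u} = {u \<in> S1. E v u}"
        proof (rule set_eqI, rule iffI)
          fix u assume u: "u \<in> {u\<in>S1 \<union> B. E v u}"
          then have "u \<notin> B" using vA cross by blast
          then show "u \<in> {u \<in> S1. E v u}" using u by blast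
        qed blast
        then show ?thesis using S1(3) True by simp
      next
        case False
        then have vB: "v \<in> B" using v by auto
        have vV: "v \<in> V" using vB AB by auto
        have "\<forall>u\<in>S1. \<not> E v u"
        proof
          fix u assume u: "u \<in> S1"
          then have "u \<in> A" "u \<in> V" using S1 AB by auto
          then have "\<not> E u v" using cross vB by blast
          then show "\<not> E v u" using sym \<open>u \<in> V\<close> vV by blast
        qed
        then have "{u\<in>S1 \<union> B. E v u} \<subseteq> B - {v}" using irr vV by blast
        then have "card {u\<in>S1 \<union> B. E v u} \<le> card (B - {v})" using fB by (intro card_mono) auto
        also have "\<dots> = card B - 1" using vB by simp
        finally show ?thesis using cB ab by simp
      qed
    qed
    moreover have "S1 \<union> B \<subseteq> V" using S1 AB by auto
    ultimately show "(\<exists>S\<subseteq>V. card S = k + 1 + a \<and> (\<forall>v\<in>S. card {u \<in> S. F v u} \<le> k)) \<or>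
      (\<exists>S\<subseteq>V. card S = k + 1 + b \<and> (\<forall>v\<in>S. card {u \<in> S. E v u} \<le> k))" using cS by blast
  qed
qed

lemma split_lemma:
  assumes g: "good V E F" and sp: "splits V E"
    and ab: "1 \<le> a" "b \<le> k + 1" and cV: "card V = a + b + k"
    and IH: "\<And>W b'. W \<subseteq> V \<Longrightarrow> card W < card V \<Longrightarrow> 1 \<le> b' \<Longrightarrow> b' \<le> k + 1 \<Longrightarrow>
       card W = a + b' + k \<Longrightarrow> concl k W E F a b'"
  shows "concl k V E F a b"
proof -
  obtain A B where AB: "A \<union> B = V" "A \<inter> B = {}" "A \<noteq> {}" "B \<noteq> {}"
    and cross: "\<forall>x\<in>A. \<forall>y\<in>B. \<not> E x y" using sp unfolding splits_def by blast
  have sym: "\<forall>u\<in>V. \<forall>v\<in>V. E u v = E v u" using g unfolding good_def by blast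
  have cross': "\<forall>x\<in>B. \<forall>y\<in>A. \<not> E x y" using cross sym AB by blast
  show ?thesis
  proof (cases "card B < b")
    case True
    then show ?thesis using split_small[OF g AB(1,2,4) cross ab cV True IH] by blast
  next
    case nB: False
    show ?thesis
    proof (cases "card A < b")
      case True
      have "B \<union> A = V" "B \<inter> A = {}" using AB by auto
      then show ?thesis using split_small[OF g _ _ AB(3) cross' ab cV True IH] by blast
    next
      case False
      then show ?thesis using split_big[OF g AB(1,2) cross ab cV] nB by simp
    qed
  qed
qed

lemma main_n:
  "card V = n \<Longrightarrow> good V E F \<Longrightarrow> 1 \<le> a \<Longrightarrow> a \<le> k + 1 \<Longrightarrow> 1 \<le> b \<Longrightarrow> b \<le> k + 1 \<Longrightarrow>
   card V = a + b + k \<Longrightarrow> concl k V E F a b"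
proof (induction n arbitrary: V E F a b rule: less_induct)
  case (less n)
  have "splits V E \<or> splits V F" using decomp_n[OF less.prems(1,2)] less.prems by auto
  then show ?case
  proof
    assume "splits V E"
    then show ?thesis
    proof (rule split_lemma[OF less.prems(2) _ less.prems(3,6,7)])
      fix W b' assume "W \<subseteq> V" "card W < card V" "1 \<le> b'" "b' \<le> k + 1" "card W = a + b' + k"
      then show "concl k W E F a b'"
        using less.IH[of "card W" W E F a b'] good_sub[OF less.prems(2)] less.prems by auto
    qed
  next
    assume "splits V F"
    have "concl k V F E b a"
    proof (rule split_lemma[OF good_sym[OF less.prems(2)] \<open>splits V F\<close> less.prems(5,4)])
      show "card V = b + a + k" using less.prems by simp
      fix W a' assume "W \<subseteq> V" "card W < card V" "1 \<le> a'" "a' \<le> k + 1" "card W = b + a' + k"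
      then show "concl k W F E b a'"
        using less.IH[of "card W" W F E b a'] good_sub[OF good_sym[OF less.prems(2)]] less.prems by auto
    qed
    then show ?thesis using concl_swap by blast
  qed
qed


lemma upper:
  assumes "k + 2 \<le> i" and "i \<le> 2 * k + 2" and "k + 2 \<le> j" and "j \<le> 2 * k + 2"
    and sg: "simple_graph (i + j - k - 2) E" and cg: "cograph (i + j - k - 2) E"
  shows "(\<exists>S. dense_set (i + j - k - 2) E k i S) \<or> (\<exists>S. sparse_set (i + j - k - 2) E k j S)"
proof -
  define n where "n = i + j - k - 2"
  define V where "V = {..<n}"
  have sym: "\<forall>u\<in>V. \<forall>v\<in>V. E u v = E v u" and irr: "\<forall>v\<in>V. \<not> E v v"
    using sg unfolding simple_graph_def V_def n_def by auto
  have p: "p4free V E" using cg unfolding cograph_def p4free_def V_def n_def by blast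
  have Fd: "\<forall>u\<in>V. \<forall>v\<in>V. compl_graph E u v = (u \<noteq> v \<and> \<not> E u v)"
    unfolding compl_graph_def by blast
  have fV: "finite V" unfolding V_def by simp
  have g: "good V E (compl_graph E)"
    unfolding good_def using fV sym irr p Fd p4_compl[OF Fd p sym] by (intro conjI)
  have cV: "card V = (i - k - 1) + (j - k - 1) + k" unfolding V_def n_def using assms by simp
  have ai: "k + 1 + (i - k - 1) = i" and bj: "k + 1 + (j - k - 1) = j" using assms by auto
  have "concl k V E (compl_graph E) (i - k - 1) (j - k - 1)"
    by (rule main_n[OF refl g _ _ _ _ cV]) (use assms in auto)
  then show ?thesis unfolding concl_def
  proof
    assume "\<exists>S\<subseteq>V. card S = k + 1 + (i - k - 1) \<and> (\<forall>v\<in>S. card {u \<in> S. compl_graph E v u} \<le> k)"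
    then obtain S where "S \<subseteq> V" "card S = i" "\<forall>v\<in>S. card {u \<in> S. compl_graph E v u} \<le> k"
      using ai by auto
    then have "dense_set (i + j - k - 2) E k i S"
      unfolding dense_set_def sparse_set_def V_def n_def by blast
    then show ?thesis by blast
  next
    assume "\<exists>S\<subseteq>V. card S = k + 1 + (j - k - 1) \<and> (\<forall>v\<in>S. card {u \<in> S. E v u} \<le> k)"
    then obtain S where "S \<subseteq> V" "card S = j" "\<forall>v\<in>S. card {u \<in> S. E v u} \<le> k"
      using bj by auto
    then have "sparse_set (i + j - k - 2) E k j S"
      unfolding sparse_set_def V_def n_def by blast
    then show ?thesis by blast
  qed
qed

lemma lower:
  assumes "k + 2 \<le> i" and "k + 2 \<le> j" and m: "m < i + j - k - 2"
  shows "\<exists>E. simple_graph m E \<and> cograph m E \<and> \<not> (\<exists>S. dense_set m E k i S) \<and>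
      \<not> (\<exists>S. sparse_set m E k j S)"
proof -
  define E where "E = (\<lambda>u v::nat. u \<noteq> v \<and> u < i - 1 \<and> v < i - 1)"
  have sg: "simple_graph m E" unfolding simple_graph_def E_def by auto
  have cg: "cograph m E" unfolding cograph_def
  proof (clarify)
    fix a b c d assume "distinct [a, b, c, d]" "E a b" "E b c" "\<not> E a c"
    then show False unfolding E_def by simp
  qed
  have nd: "\<not> dense_set m E k i S" for S
  proof
    assume d: "dense_set m E k i S"
    then have S: "S \<subseteq> {..<m}" "card S = i" "\<forall>v\<in>S. card {u\<in>S. compl_graph E v u} \<le> k"
      unfolding dense_set_def sparse_set_def by auto
    have fS: "finite S" using S(1) finite_subset by blast
    show False
    proof (cases "\<exists>v\<in>S. i - 1 \<le> v")
      case True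
      then obtain v where v: "v \<in> S" "i - 1 \<le> v" by blast
      have "{u\<in>S. compl_graph E v u} = S - {v}" using v unfolding compl_graph_def E_def by auto
      then have "card {u\<in>S. compl_graph E v u} = i - 1" using v S fS by simp
      moreover have "card {u\<in>S. compl_graph E v u} \<le> k" using S(3) v(1) by blast
      ultimately show False using assms by linarith
    next
      case False
      then have "S \<subseteq> {..<i - 1}" by auto
      then have "card S \<le> card {..<i - 1}" by (intro card_mono) auto
      then have "card S \<le> i - 1" by simp
      then show False using S assms by simp
    qed
  qed
  have ns: "\<not> sparse_set m E k j S" for S
  proof
    assume d: "sparse_set m E k j S"
    then have S: "S \<subseteq> {..<m}" "card S = j" "\<forall>v\<in>S. card {u\<in>S. E v u} \<le> k"
      unfolding sparse_set_def by auto
    have fS: "finite S" using S(1) finite_subset by blast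
    define C where "C = S \<inter> {..<i - 1}"
    define D where "D = S - {..<i - 1}"
    have "D \<subseteq> {i - 1..<m}" using S(1) unfolding D_def by auto
    then have cD: "card D \<le> m - (i - 1)" using card_mono[of "{i - 1..<m}" D] by simp
    have "C \<union> D = S" "C \<inter> D = {}" unfolding C_def D_def by auto
    moreover have "finite C" "finite D" using fS unfolding C_def D_def by auto
    ultimately have "card S = card C + card D" using card_Un_disjoint by metis
    then have cC: "card C \<ge> k + 2" using cD S(2) m assms by linarith
    then have "C \<noteq> {}" by auto
    then obtain v where v: "v \<in> C" by blast
    have fC: "finite C" using fS C_def by auto
    have "{u\<in>S. E v u} = C - {v}" using v unfolding C_def E_def by auto
    then have "card {u\<in>S. E v u} = card C - 1" using v fC by simp
    moreover have "v \<in> S" using v C_def by auto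
    ultimately have "card C - 1 \<le> k" using S(3) by metis
    then show False using cC by linarith
  qed
  show ?thesis using sg cg nd ns by blast
qed

theorem lemma7p2:
  fixes k i j :: nat
  assumes "k + 2 \<le> i" and "i \<le> 2 * k + 2"
      and "k + 2 \<le> j" and "j \<le> 2 * k + 2"
  shows "R_cograph k i j = i + j - k - 2"
  unfolding R_cograph_def
proof (rule Least_equality)
  show "\<forall>E. simple_graph (i + j - k - 2) E \<and> cograph (i + j - k - 2) E \<longrightarrow>
    (\<exists>S. dense_set (i + j - k - 2) E k i S) \<or> (\<exists>S. sparse_set (i + j - k - 2) E k j S)"
    using upper[OF assms] by blast
next
  fix m
  assume P: "\<forall>E. simple_graph m E \<and> cograph m E \<longrightarrow>
    (\<exists>S. dense_set m E k i S) \<or> (\<exists>S. sparse_set m E k j S)"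
  show "i + j - k - 2 \<le> m"
  proof (rule ccontr)
    assume "\<not> i + j - k - 2 \<le> m"
    then have "m < i + j - k - 2" by simp
    then obtain E where "simple_graph m E" "cograph m E" "\<not> (\<exists>S. dense_set m E k i S)"
      "\<not> (\<exists>S. sparse_set m E k j S)" using lower[OF assms(1,3)] by blast
    then show False using P by blast
  qed
qed

end
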